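(* Let $p\ge 1$, let $\mathbf{S}$ be a real symmetric positive semidefinite $p\times p$ matrix, let $\mathbf{T}$ be a real symmetric positive definite $p\times p$ matrix, and let $\lambda_a\in(0,\infty)$. Consider the penalized log-likelihood $$\mathcal{L}^{p}(\mathbf{\Omega}) = \ln|\mathbf{\Omega}| - \mathrm{tr}(\mathbf{S}\mathbf{\Omega}) - \frac{\lambda_a}{2}\,\mathrm{tr}\big[(\mathbf{\Omega}-\mathbf{T})^{\mathrm{T}}(\mathbf{\Omega}-\mathbf{T})\big]$$ over real symmetric positive definite $p\times p$ matrices $\mathbf{\Omega}$. Then $\mathcal{L}^p$ is maximized by $$\hat{\mathbf{\Omega}}^{\mathrm{I}a}(\lambda_a) = \Big\{\Big[\lambda_a\mathbf{I}_p + \tfrac14(\mathbf{S}-\lambda_a\mathbf{T})^2\Big]^{1/2} + \tfrac12(\mathbf{S}-\lambda_a\mathbf{T})\Big\}^{-1},$$ which is the solution of the stationarity equation $\mathbf{\Omega}^{-1} - (\mathbf{S}-\lambda_a\mathbf{T}) - \lambda_a\mathbf{\Omega} = \mathbf{0}$.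
   Context: $|\cdot|$ denotes the determinant, $\mathbf{I}_p$ the $p\times p$ identity matrix. For a real symmetric positive definite matrix $\mathbf{H}$, $\mathbf{H}^{1/2}$ denotes its unique symmetric positive definite square root. *)

theory Defs
  imports "HOL-Analysis.Analysis"
begin

definition sym_mat :: "real^'n^'n \<Rightarrow> bool" where
  "sym_mat A \<longleftrightarrow> transpose A = A"

definition psd_mat :: "real^'n^'n \<Rightarrow> bool" where
  "psd_mat A \<longleftrightarrow> sym_mat A \<and> (\<forall>x. x \<bullet> (A *v x) \<ge> 0)"

definition pd_mat :: "real^'n^'n \<Rightarrow> bool" where
  "pd_mat A \<longleftrightarrow> sym_mat A \<and> (\<forall>x. x \<noteq> 0 \<longrightarrow> x \<bullet> (A *v x) > 0)"

definition mat_sqrt :: "real^'n^'n \<Rightarrow> real^'n^'n" where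
  "mat_sqrt H = (THE R. pd_mat R \<and> R ** R = H)"

definition pen_loglik :: "real^'n^'n \<Rightarrow> real^'n^'n \<Rightarrow> real \<Rightarrow> real^'n^'n \<Rightarrow> real" where
  "pen_loglik S T lam \<Omega> =
     ln (det \<Omega>) - trace (S ** \<Omega>)
     - (lam / 2) * trace (transpose (\<Omega> - T) ** (\<Omega> - T))"

definition ridge_est :: "real^'n^'n \<Rightarrow> real^'n^'n \<Rightarrow> real \<Rightarrow> real^'n^'n" where
  "ridge_est S T lam =
     matrix_inv (mat_sqrt (mat lam + (1/4) *\<^sub>R ((S - lam *\<^sub>R T) ** (S - lam *\<^sub>R T)))
                 + (1/2) *\<^sub>R (S - lam *\<^sub>R T))"

end

theory Submission
  imports Defs
begin


definition dg :: "real^'n \<Rightarrow> real^'n^'n" where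
  "dg d = (\<chi> i j. if i = j then d$i else 0)"
lemma mul_dg: "(M ** dg d) $ i $ j = M$i$j * d$j"
proof -
  have "(M ** dg d) $ i $ j = (\<Sum>k\<in>UNIV. M $ i $ k * (if k = j then d $ k else 0))"
    unfolding matrix_matrix_mult_def dg_def by simp
  also have "\<dots> = (\<Sum>k\<in>UNIV. if k = j then M$i$j * d$j else 0)"
    by (rule sum.cong) auto
  also have "\<dots> = M$i$j * d$j" by simp
  finally show ?thesis .
qed
lemma dg_mul: "(dg d ** M) $ i $ j = d$i * M$i$j"
proof -
  have "(dg d ** M) $ i $ j = (\<Sum>k\<in>UNIV. (if i = k then d $ i else 0) * M $ k $ j)"
    unfolding matrix_matrix_mult_def dg_def by simp
  also have "\<dots> = (\<Sum>k\<in>UNIV. if i = k then d$i * M$i$j else 0)"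
    by (rule sum.cong) auto
  also have "\<dots> = d$i * M$i$j" by simp
  finally show ?thesis .
qed
lemma sym_inner:
  fixes A :: "real^'n^'n"
  assumes "sym_mat A"
  shows "x \<bullet> (A *v y) = (A *v x) \<bullet> y"
proof -
  have "x \<bullet> (A *v y) = (x v* A) \<bullet> y" by (simp add: dot_lmul_matrix)
  also have "x v* A = A *v x" using assms transpose_matrix_vector unfolding sym_mat_def by metis
  finally show ?thesis .
qed

lemma eigen_in_subspace:
  fixes A :: "real^'n^'n"
  assumes sA: "sym_mat A" and V: "subspace V" and ne: "V \<noteq> {0}"
    and inv: "\<And>x. x \<in> V \<Longrightarrow> A *v x \<in> V"
  shows "\<exists>u\<in>V. norm u = 1 \<and> A *v u = (u \<bullet> (A *v u)) *\<^sub>R u"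
proof -
  define q where "q x = x \<bullet> (A *v x)" for x :: "real^'n"
  have cq: "continuous_on UNIV q" unfolding q_def
    by (intro continuous_intros)
  let ?K = "V \<inter> sphere 0 1"
  have cK: "compact ?K"
    by (intro closed_Int_compact closed_subspace V compact_sphere)
  obtain x where x: "x \<in> V" "x \<noteq> 0" using ne V subspace_0 by blast
  then have "x /\<^sub>R norm x \<in> ?K" using V by (simp add: subspace_scale)
  then have Kne: "?K \<noteq> {}" by blast
  obtain u where u: "u \<in> ?K" and umax: "\<And>y. y \<in> ?K \<Longrightarrow> q y \<le> q u"
    using continuous_attains_sup[OF cK Kne continuous_on_subset[OF cq]] by blast
  define c where "c = q u"
  have uV: "u \<in> V" and nu: "norm u = 1" using u by auto
  have uu: "u \<bullet> u = 1" using nu by (simp add: norm_eq_1)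
  have qs: "q (a *\<^sub>R y) = a^2 * q y" for a y
    by (simp add: q_def matrix_vector_mult_scaleR power2_eq_square)
  have bound: "q y \<le> c * (y \<bullet> y)" if "y \<in> V" for y
  proof (cases "y = 0")
    case True then show ?thesis by (simp add: q_def)
  next
    case False
    then have "y /\<^sub>R norm y \<in> ?K" using that V by (simp add: subspace_scale)
    then have "q (y /\<^sub>R norm y) \<le> c" using umax c_def by blast
    then have "(1 / norm y)^2 * q y \<le> c" using qs by (simp add: divide_inverse)
    then have "q y \<le> c * (norm y)^2" using False
      by (simp add: field_simps power2_eq_square)
    then show ?thesis by (simp add: power2_norm_eq_inner)
  qed
  define w where "w = A *v u - c *\<^sub>R u"
  have wV: "w \<in> V" unfolding w_def using inv uV V by (simp add: subspace_diff subspace_scale)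
  have wu: "w \<bullet> u = 0" unfolding w_def c_def q_def using uu
    by (simp add: inner_diff_left inner_diff_right inner_commute)
  have wAu: "w \<bullet> (A *v u) = w \<bullet> w"
    unfolding w_def using wu[unfolded w_def]
    by (simp add: inner_diff_left inner_diff_right algebra_simps)
  have uAw: "u \<bullet> (A *v w) = w \<bullet> w"
    using sym_inner[OF sA, of u w] wAu by (simp add: inner_commute)
  have key: "2 * t * (w \<bullet> w) \<le> t^2 * (c * (w \<bullet> w) - q w)" for t
  proof -
    have "u + t *\<^sub>R w \<in> V" using uV wV V by (simp add: subspace_add subspace_scale)
    from bound[OF this] have b1: "q (u + t *\<^sub>R w) \<le> c * ((u + t *\<^sub>R w) \<bullet> (u + t *\<^sub>R w))" .
    have b2: "q (u + t *\<^sub>R w) = c + 2 * t * (w \<bullet> w) + t^2 * q w"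
      using wAu uAw unfolding q_def c_def
      by (simp add: matrix_vector_right_distrib matrix_vector_mult_scaleR inner_add_left inner_add_right
          power2_eq_square algebra_simps inner_commute)
    have b3: "(u + t *\<^sub>R w) \<bullet> (u + t *\<^sub>R w) = 1 + t^2 * (w \<bullet> w)"
      using uu wu by (simp add: inner_add_left inner_add_right power2_eq_square inner_commute)
    have "c + 2 * t * (w \<bullet> w) + t^2 * q w \<le> c * (1 + t^2 * (w \<bullet> w))"
      using b1 unfolding b2 b3 .
    then show ?thesis by (simp add: algebra_simps)
  qed
  have "w = 0"
  proof (rule ccontr)
    assume "w \<noteq> 0"
    then have p: "w \<bullet> w > 0" by simp
    define M where "M = c * (w \<bullet> w) - q w"
    define t where "t = (w \<bullet> w) / (\<bar>M\<bar> + 1)"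
    have tp: "t > 0" using p by (simp add: t_def)
    have "2 * t * (w \<bullet> w) \<le> t^2 * M" using key M_def by simp
    then have "2 * (w \<bullet> w) \<le> t * M" using tp by (simp add: power2_eq_square)
    also have "\<dots> \<le> t * \<bar>M\<bar>" using tp by (simp add: mult_left_mono)
    also have "\<dots> < w \<bullet> w" unfolding t_def using p
      by (simp add: field_simps)
    finally show False using p by simp
  qed
  then show ?thesis using uV nu by (auto simp: w_def c_def q_def)
qed

lemma eigen_basis_aux:
  fixes A :: "real^'n^'n"
  assumes sA: "sym_mat A"
  shows "k \<le> CARD('n) \<Longrightarrow> \<exists>B. card B = k \<and> pairwise orthogonal B \<and>
           (\<forall>b\<in>B. norm b = 1 \<and> (\<exists>\<mu>. A *v b = \<mu> *\<^sub>R b))"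
proof (induction k)
  case 0
  show ?case by (rule exI[of _ "{}"]) simp
next
  case (Suc k)
  then obtain B where B: "card B = k" "pairwise orthogonal B"
    "\<And>b. b \<in> B \<Longrightarrow> norm b = 1 \<and> (\<exists>\<mu>. A *v b = \<mu> *\<^sub>R b)" by auto
  have fB: "finite B" using B(2) pairwise_orthogonal_imp_finite by blast
  have B0: "0 \<notin> B" using B(3) by force
  have indB: "independent B" using pairwise_orthogonal_independent[OF B(2) B0] .
  have "span B \<noteq> UNIV"
  proof
    assume "span B = UNIV"
    then have "dim (UNIV :: (real^'n) set) = card B"
      using dim_span_eq_card_independent[OF indB] by simp
    then show False using Suc.prems B(1) by simp
  qed
  then obtain a :: "real^'n" where a: "a \<noteq> 0" "\<forall>x\<in>span B. a \<bullet> x = 0"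
    using span_not_UNIV_orthogonal by blast
  define V where "V = {y. \<forall>x \<in> B. orthogonal x y}"
  have sV: "subspace V" unfolding V_def by (rule subspace_orthogonal_to_vectors)
  have aV: "a \<in> V" unfolding V_def orthogonal_def
  proof (intro CollectI ballI)
    fix x assume "x \<in> B"
    then have "a \<bullet> x = 0" using a(2) span_base by blast
    then show "x \<bullet> a = 0" by (simp add: inner_commute)
  qed
  have Vne: "V \<noteq> {0}" using aV a(1) by blast
  have inv: "A *v y \<in> V" if "y \<in> V" for y
    unfolding V_def orthogonal_def
  proof (intro CollectI ballI)
    fix b assume bB: "b \<in> B"
    then obtain \<mu> where mu: "A *v b = \<mu> *\<^sub>R b" using B(3) by blast
    have "b \<bullet> y = 0" using that bB unfolding V_def orthogonal_def by blast
    then show "b \<bullet> (A *v y) = 0" using sym_inner[OF sA, of b y] mu by simp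
  qed
  obtain u where u: "u \<in> V" "norm u = 1" "A *v u = (u \<bullet> (A *v u)) *\<^sub>R u"
    using eigen_in_subspace[OF sA sV Vne inv] by blast
  have uB: "u \<notin> B"
  proof
    assume "u \<in> B"
    then have "u \<bullet> u = 0" using u(1) unfolding V_def orthogonal_def by blast
    then show False using u(2) by simp
  qed
  show ?case
  proof (intro exI conjI)
    show "card (insert u B) = Suc k" using fB uB B(1) by simp
    show "pairwise orthogonal (insert u B)"
      apply (rule pairwise_orthogonal_insert[OF B(2)])
      using u(1) unfolding V_def by (simp add: orthogonal_commute)
    show "\<forall>b\<in>insert u B. norm b = 1 \<and> (\<exists>\<mu>. A *v b = \<mu> *\<^sub>R b)"
      using B(3) u by blast
  qed
qed


lemma spectral:
  fixes A :: "real^'n^'n"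
  assumes sA: "sym_mat A"
  obtains Q d where "orthogonal_matrix Q" "A = Q ** dg d ** transpose Q"
proof -
  obtain B where B: "card B = CARD('n)" "pairwise orthogonal B"
    "\<And>b. b \<in> B \<Longrightarrow> norm b = 1 \<and> (\<exists>\<mu>. A *v b = \<mu> *\<^sub>R b)"
    using eigen_basis_aux[OF sA, of "CARD('n)"] by auto
  have fB: "finite B" using B(2) pairwise_orthogonal_imp_finite by blast
  obtain f where f: "bij_betw f (UNIV::'n set) B"
    using finite_same_card_bij[OF finite_class.finite_UNIV fB] B(1) by metis
  have fB': "f i \<in> B" for i using f by (auto simp: bij_betw_def)
  have [simp]: "norm (f i) = 1" for i using B(3) fB' by blast
  have [simp]: "i \<noteq> j \<Longrightarrow> orthogonal (f i) (f j)" for i j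
    using B(2) f by (auto simp: pairwise_def bij_betw_def inj_on_def)
  have "\<forall>i. \<exists>\<mu>. A *v f i = \<mu> *\<^sub>R f i" using B(3) fB' by blast
  then obtain mu where mu: "\<And>i. A *v f i = mu i *\<^sub>R f i" by metis
  define Q where "Q = (\<chi> i j. f j $ i)"
  have oQ: "orthogonal_matrix Q"
    unfolding Q_def by (simp add: orthogonal_matrix_orthonormal_columns column_def)
  have AQ: "A ** Q = Q ** dg (\<chi> i. mu i)"
  proof -
    have "(A ** Q) $ i $ j = (A *v f j) $ i" for i j
      by (simp add: Q_def matrix_matrix_mult_def matrix_vector_mult_def)
    moreover have "(Q ** dg (\<chi> i. mu i)) $ i $ j = mu j * f j $ i" for i j
      by (simp add: Q_def mul_dg)
    ultimately show ?thesis using mu by (simp add: vec_eq_iff)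
  qed
  have "A = A ** (Q ** transpose Q)" using oQ by (simp add: orthogonal_matrix_def)
  also have "\<dots> = Q ** dg (\<chi> i. mu i) ** transpose Q" by (simp add: matrix_mul_assoc AQ)
  finally show ?thesis using that oQ by blast
qed



lemma mm_add_r: "((A::real^'n^'m) + B) ** (C::real^'p^'n) = A ** C + B ** C"
  by (vector matrix_matrix_mult_def sum.distrib[symmetric] field_simps)
lemma mm_diff_r: "((A::real^'n^'m) - B) ** (C::real^'p^'n) = A ** C - B ** C"
  by (vector matrix_matrix_mult_def sum_subtractf[symmetric] field_simps)
lemma mm_diff_l: "(C::real^'n^'m) ** ((A::real^'p^'n) - B) = C ** A - C ** B"
  by (vector matrix_matrix_mult_def sum_subtractf[symmetric] field_simps)
lemma transpose_add': "transpose ((A::real^'n^'m) + B) = transpose A + transpose B"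
  by (simp add: transpose_def vec_eq_iff)
lemma transpose_diff': "transpose ((A::real^'n^'m) - B) = transpose A - transpose B"
  by (simp add: transpose_def vec_eq_iff)
lemma trace_scale: "trace (c *\<^sub>R (A::real^'n^'n)) = c * trace A"
  by (simp add: trace_def sum_distrib_left)
lemma trace_transpose': "trace (transpose (A::real^'n^'n)) = trace A"
  by (simp add: trace_def transpose_def)
lemma trace_gram_nonneg: "trace (transpose (A::real^'n^'n) ** A) \<ge> 0"
  by (simp add: trace_def matrix_matrix_mult_def transpose_def sum_nonneg)
lemma mat_scale: "mat c = c *\<^sub>R (mat 1 :: real^'n^'n)"
  by (simp add: mat_def vec_eq_iff)

lemma inner_mv: "x \<bullet> ((M::real^'n^'m) *v z) = (transpose M *v x) \<bullet> z"
proof -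
  have "x \<bullet> (M *v z) = (x v* M) \<bullet> z" by (simp add: dot_lmul_matrix)
  then show ?thesis by simp
qed

declare transpose_matrix_vector[simp del] vector_transpose_matrix[simp del]

lemma dg_mv: "(dg a *v y) $ i = a$i * y$i"
proof -
  have "(dg a *v y) $ i = (\<Sum>k\<in>UNIV. (if i = k then a $ i else 0) * y $ k)"
    unfolding matrix_vector_mult_def dg_def by simp
  also have "\<dots> = (\<Sum>k\<in>UNIV. if i = k then a$i * y$i else 0)"
    by (rule sum.cong) auto
  also have "\<dots> = a$i * y$i" by simp
  finally show ?thesis .
qed

lemma dg_dg: "dg a ** dg b = dg (\<chi> i. a$i * b$i)"
  by (simp add: vec_eq_iff dg_mul) (simp add: dg_def)

lemma dg_add: "dg a + dg b = dg (a + b)" by (simp add: dg_def vec_eq_iff)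
lemma dg_diff: "dg a - dg b = dg (a - b)" by (simp add: dg_def vec_eq_iff)
lemma dg_scale: "c *\<^sub>R dg a = dg (c *\<^sub>R a)" by (simp add: dg_def vec_eq_iff)
lemma dg_vec: "dg (vec c) = mat c" by (simp add: dg_def vec_eq_iff mat_def)
lemma dg_transpose: "transpose (dg a) = dg a" by (simp add: dg_def vec_eq_iff transpose_def)
lemma det_dg: "det (dg a) = prod (\<lambda>i. a$i) UNIV"
  by (subst det_diagonal) (auto simp: dg_def)
lemma trace_dg: "trace (dg a) = sum (\<lambda>i. a$i) UNIV"
  by (simp add: trace_def dg_def)

definition sp :: "real^'n^'n \<Rightarrow> real^'n \<Rightarrow> real^'n^'n" where
  "sp Q a = Q ** dg a ** transpose Q"

lemma orth_TQ: "orthogonal_matrix Q \<Longrightarrow> transpose Q ** Q = mat 1"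
  by (simp add: orthogonal_matrix_def)
lemma orth_QT: "orthogonal_matrix Q \<Longrightarrow> Q ** transpose Q = mat 1"
  by (simp add: orthogonal_matrix_def)

lemma sp_mult: assumes "orthogonal_matrix Q"
  shows "sp Q a ** sp Q b = sp Q (\<chi> i. a$i * b$i)"
proof -
  have "sp Q a ** sp Q b = Q ** dg a ** (transpose Q ** Q) ** dg b ** transpose Q"
    unfolding sp_def by (simp add: matrix_mul_assoc)
  also have "\<dots> = Q ** (dg a ** dg b) ** transpose Q"
    using assms by (simp add: orth_TQ matrix_mul_assoc)
  finally show ?thesis by (simp add: dg_dg sp_def)
qed

lemma sp_add: "sp Q a + sp Q b = sp Q (a + b)"
  unfolding sp_def by (simp add: mm_add_r matrix_add_ldistrib dg_add[symmetric])
lemma sp_diff: "sp Q a - sp Q b = sp Q (a - b)"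
  unfolding sp_def by (simp add: mm_diff_r mm_diff_l dg_diff[symmetric])
lemma sp_scale: "c *\<^sub>R sp Q a = sp Q (c *\<^sub>R a)"
  unfolding sp_def by (simp add: dg_scale[symmetric] scalar_matrix_assoc matrix_scalar_ac)
lemma mm_mat: "(A::real^'n^'m) ** mat c = c *\<^sub>R A"
  by (metis mat_scale matrix_mul_rid matrix_scalar_ac)
lemma sp_vec: "orthogonal_matrix Q \<Longrightarrow> sp Q (vec c) = mat c"
  unfolding sp_def dg_vec mm_mat
  by (metis mat_scale orth_QT scalar_matrix_assoc)
lemma sp_sym: "sym_mat (sp Q a)"
  unfolding sym_mat_def sp_def by (simp add: matrix_transpose_mul dg_transpose matrix_mul_assoc)

lemma det_orth: "orthogonal_matrix Q \<Longrightarrow> det Q * det Q = 1"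
  by (metis det_I det_mul det_transpose orth_TQ)

lemma det_sp: "orthogonal_matrix Q \<Longrightarrow> det (sp Q a) = prod (\<lambda>i. a$i) UNIV"
  unfolding sp_def by (simp add: det_mul det_dg) (metis det_orth mult.commute mult.left_commute mult_1_right)

lemma trace_sp: "orthogonal_matrix Q \<Longrightarrow> trace (sp Q a) = sum (\<lambda>i. a$i) UNIV"
proof -
  assume o: "orthogonal_matrix Q"
  have "trace (sp Q a) = trace ((dg a ** transpose Q) ** Q)"
    unfolding sp_def by (metis matrix_mul_assoc trace_mul_sym)
  also have "\<dots> = trace (dg a)" using o by (simp add: matrix_mul_assoc[symmetric] orth_TQ)
  finally show ?thesis by (simp add: trace_dg)
qed

lemma quad_sp: "x \<bullet> (sp Q a *v x) = (\<Sum>i\<in>UNIV. a$i * ((transpose Q *v x)$i)^2)"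
proof -
  have "x \<bullet> (sp Q a *v x) = x \<bullet> (Q *v (dg a *v (transpose Q *v x)))"
    unfolding sp_def by (simp add: matrix_vector_mul_assoc matrix_mul_assoc)
  also have "\<dots> = (transpose Q *v x) \<bullet> (dg a *v (transpose Q *v x))"
    by (simp only: inner_mv)
  also have "\<dots> = (\<Sum>i\<in>UNIV. a$i * ((transpose Q *v x)$i)^2)"
    by (simp add: inner_vec_def dg_mv power2_eq_square mult_ac)
  finally show ?thesis .
qed

lemma pd_sp: fixes Q :: "real^'n^'n" assumes o: "orthogonal_matrix Q" and a: "\<And>i. a$i > 0"
  shows "pd_mat (sp Q a)"
  unfolding pd_mat_def
proof (intro conjI allI impI)
  show "sym_mat (sp Q a)" by (rule sp_sym)
  fix x :: "real^'n" assume "x \<noteq> 0"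
  define y where "y = transpose Q *v x"
  have "Q *v y = x" using o by (simp add: y_def matrix_vector_mul_assoc orth_QT)
  then have "y \<noteq> 0" using \<open>x \<noteq> 0\<close> by auto
  then obtain i where i: "y$i \<noteq> 0" by (auto simp: vec_eq_iff)
  have "0 < (\<Sum>i\<in>UNIV. a$i * (y$i)^2)"
    by (rule sum_pos2[of _ i]) (use a i in \<open>auto intro: mult_pos_pos simp: less_imp_le\<close>)
  then show "x \<bullet> (sp Q a *v x) > 0" by (simp add: quad_sp y_def)
qed

lemma pd_sp_conv: assumes o: "orthogonal_matrix Q" and p: "pd_mat (sp Q a)"
  shows "a$i > 0"
proof -
  define x where "x = Q *v axis i 1"
  have tx: "transpose Q *v x = axis i 1" using o by (simp add: x_def matrix_vector_mul_assoc orth_TQ)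
  then have "x \<noteq> 0" by (metis axis_nth matrix_vector_mult_0_right zero_index zero_neq_one)
  then have "x \<bullet> (sp Q a *v x) > 0" using p by (simp add: pd_mat_def)
  also have "x \<bullet> (sp Q a *v x) = (\<Sum>k\<in>UNIV. if k = i then a$i else 0)"
    unfolding quad_sp tx by (rule sum.cong) (auto simp: axis_def)
  finally show ?thesis by simp
qed

lemma matrix_inv_eq: assumes "(M::real^'n^'n) ** N = mat 1" "N ** M = mat 1"
  shows "matrix_inv M = N"
  unfolding matrix_inv_def
proof (rule someI2[of _ N])
  show "M ** N = mat 1 \<and> N ** M = mat 1" using assms by simp
  fix N' assume "M ** N' = mat 1 \<and> N' ** M = mat 1"
  then have "N' = N' ** (M ** N)" "N' ** M = mat 1" using assms by auto
  then show "N' = N" by (simp add: matrix_mul_assoc)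
qed

lemma sqrt_unique: assumes p1: "pd_mat (R1::real^'n^'n)" and p2: "pd_mat R2" and eq: "R1 ** R1 = R2 ** R2"
  shows "R1 = R2"
proof -
  define D where "D = R1 - R2"
  have sD: "sym_mat D" using p1 p2 unfolding D_def pd_mat_def sym_mat_def by (simp add: transpose_diff')
  obtain P d where o: "orthogonal_matrix P" and Dd: "D = sp P d"
    using spectral[OF sD] unfolding sp_def by blast
  have "d$i = 0" for i
  proof -
    define v where "v = P *v axis i 1"
    have tv: "transpose P *v v = axis i 1" using o by (simp add: v_def matrix_vector_mul_assoc orth_TQ)
    then have v0: "v \<noteq> 0" by (metis axis_nth matrix_vector_mult_0_right zero_index zero_neq_one)
    have Dv: "D *v v = d$i *\<^sub>R v"
    proof -
      have tp: "transpose P *v (P *v w) = w" for w using o by (simp add: matrix_vector_mul_assoc orth_TQ)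
      have "D *v v = P *v (dg d *v axis i 1)"
        unfolding Dd sp_def v_def by (simp add: matrix_vector_mul_assoc[symmetric] tp)
      also have "dg d *v axis i 1 = d$i *\<^sub>R axis i 1"
        by (simp add: vec_eq_iff dg_mv axis_def)
      finally show ?thesis by (simp add: v_def matrix_vector_mult_scaleR)
    qed
    have z: "R1 ** R1 - R2 ** R2 = R1 ** D + D ** R2"
      unfolding D_def by (simp add: mm_diff_l mm_diff_r)
    have "0 = v \<bullet> ((R1 ** D + D ** R2) *v v)" using z eq by simp
    also have "\<dots> = v \<bullet> (R1 *v (D *v v)) + v \<bullet> (D *v (R2 *v v))"
      by (simp add: matrix_vector_mult_add_rdistrib inner_add_right matrix_vector_mul_assoc)
    also have "v \<bullet> (D *v (R2 *v v)) = (D *v v) \<bullet> (R2 *v v)"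
      using sym_inner[OF sD] by simp
    also have "\<dots> = d$i * (v \<bullet> (R2 *v v))" by (simp add: Dv)
    also have "v \<bullet> (R1 *v (D *v v)) = d$i * (v \<bullet> (R1 *v v))"
      by (simp add: Dv matrix_vector_mult_scaleR)
    finally have "d$i * (v \<bullet> (R1 *v v) + v \<bullet> (R2 *v v)) = 0" by (simp add: algebra_simps)
    moreover have "v \<bullet> (R1 *v v) + v \<bullet> (R2 *v v) > 0"
      using p1 p2 v0 unfolding pd_mat_def by (simp add: add_pos_pos)
    ultimately show ?thesis by simp
  qed
  then have "d = 0" by (simp add: vec_eq_iff)
  then have "dg d = 0" by (simp add: dg_def vec_eq_iff)
  then have "D = 0" unfolding Dd sp_def by simp
  then show ?thesis unfolding D_def by simp
qed



lemma sp_zero: "sp (Q::real^'n^'n) 0 = 0"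
proof -
  have "dg 0 = (0::real^'n^'n)" by (simp add: dg_def vec_eq_iff)
  then show ?thesis by (simp add: sp_def)
qed

theorem lemma1:
  fixes S T :: "real^'n^'n" and lam :: real
  assumes "psd_mat S" and "pd_mat T" and "lam > 0"
  shows "pd_mat (ridge_est S T lam)
    \<and> matrix_inv (ridge_est S T lam) - (S - lam *\<^sub>R T) - lam *\<^sub>R ridge_est S T lam = 0
    \<and> (\<forall>\<Omega>. pd_mat \<Omega> \<longrightarrow> pen_loglik S T lam \<Omega> \<le> pen_loglik S T lam (ridge_est S T lam))"
proof -
  note lp = \<open>lam > 0\<close>
  have sS: "transpose S = S" using assms(1) by (simp add: psd_mat_def sym_mat_def)
  have sT: "transpose T = T" using assms(2) by (simp add: pd_mat_def sym_mat_def)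
  define A where "A = S - lam *\<^sub>R T"
  have sA: "sym_mat A" unfolding A_def sym_mat_def by (simp add: transpose_diff' transpose_scalar sS sT)
  obtain Q a where o: "orthogonal_matrix Q" and Aa: "A = sp Q a"
    using spectral[OF sA] unfolding sp_def by blast
  define sv where "sv = (\<chi> i. sqrt (lam + (a$i)^2/4))"
  define g where "g = (\<chi> i. sv$i + a$i/2)"
  define gi where "gi = (\<chi> i. 1 / g$i)"
  have svsq: "sv$i * sv$i = lam + (a$i)^2/4" for i
    unfolding sv_def using lp by (simp add: add_nonneg_nonneg)
  have svp: "sv$i > 0" for i unfolding sv_def using lp by (simp add: add_pos_nonneg)
  have gp: "g$i > 0" for i
  proof -
    have "sqrt ((a$i/2)^2) < sqrt (lam + (a$i)^2/4)"
      using lp by (simp add: power_divide)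
    then have "\<bar>a$i/2\<bar> < sv$i" by (simp add: sv_def)
    then show ?thesis by (simp add: g_def)
  qed
  have gip: "gi$i > 0" for i using gp[of i] by (simp add: gi_def)
  have ggi: "g$i * gi$i = 1" for i using gp[of i] by (simp add: gi_def)
  have gid: "g$i - a$i - lam * gi$i = 0" for i
  proof -
    have "g$i * (g$i - a$i) = sv$i * sv$i - (a$i)^2/4"
      by (simp add: g_def algebra_simps power2_eq_square)
    also have "\<dots> = lam" using svsq by simp
    finally have "g$i - a$i = lam / g$i" using gp[of i] by (simp add: field_simps)
    then show ?thesis by (simp add: gi_def)
  qed
  define H where "H = mat lam + (1/4) *\<^sub>R (A ** A)"
  have H: "H = sp Q (\<chi> i. lam + (a$i)^2/4)"
  proof -
    have "H = sp Q (vec lam) + sp Q ((1/4) *\<^sub>R (\<chi> i. a$i * a$i))"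
      unfolding H_def Aa using o by (simp add: sp_vec sp_mult sp_scale)
    also have "\<dots> = sp Q (vec lam + (1/4) *\<^sub>R (\<chi> i. a$i * a$i))"
      by (simp add: sp_add)
    also have "vec lam + (1/4) *\<^sub>R (\<chi> i. a$i * a$i) = (\<chi> i. lam + (a$i)^2/4)"
      by (simp add: vec_eq_iff power2_eq_square)
    finally show ?thesis .
  qed
  define R where "R = sp Q sv"
  have pdR: "pd_mat R" unfolding R_def using o svp by (rule pd_sp)
  have RR: "R ** R = H" unfolding R_def H using o
    by (simp add: sp_mult svsq)
  have msq: "mat_sqrt H = R"
    unfolding mat_sqrt_def
  proof (rule the_equality)
    show "pd_mat R \<and> R ** R = H" using pdR RR by simp
    fix R' assume "pd_mat R' \<and> R' ** R' = H"
    then show "R' = R" using sqrt_unique[of R' R] pdR RR by simp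
  qed
  have M: "R + (1/2) *\<^sub>R A = sp Q g"
  proof -
    have "sv + (1/2) *\<^sub>R a = g" by (simp add: g_def vec_eq_iff)
    then show ?thesis unfolding R_def Aa by (simp add: sp_scale sp_add)
  qed
  have one: "sp Q (\<chi> i. g$i * gi$i) = mat 1" "sp Q (\<chi> i. gi$i * g$i) = mat 1"
  proof -
    have "(\<chi> i. g$i * gi$i) = vec 1" "(\<chi> i. gi$i * g$i) = vec 1"
      using ggi by (simp_all add: vec_eq_iff mult.commute)
    then show "sp Q (\<chi> i. g$i * gi$i) = mat 1" "sp Q (\<chi> i. gi$i * g$i) = mat 1"
      using sp_vec[OF o, of 1] by (simp_all only:)
  qed
  have Om: "ridge_est S T lam = sp Q gi"
    unfolding ridge_est_def A_def[symmetric] H_def[symmetric] msq M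
    by (rule matrix_inv_eq) (use o one in \<open>simp_all add: sp_mult\<close>)
  have inv: "matrix_inv (sp Q gi) = sp Q g"
    by (rule matrix_inv_eq) (use o one in \<open>simp_all add: sp_mult\<close>)
  define O0 where "O0 = sp Q gi"
  have pd0: "pd_mat O0" unfolding O0_def using o gip by (rule pd_sp)
  have stat: "sp Q g - A - lam *\<^sub>R O0 = 0"
  proof -
    have "sp Q g - A - lam *\<^sub>R O0 = sp Q (g - a - lam *\<^sub>R gi)"
      unfolding Aa O0_def by (simp add: sp_scale sp_diff)
    also have "g - a - lam *\<^sub>R gi = 0" using gid by (simp add: vec_eq_iff)
    finally show ?thesis by (simp add: sp_zero)
  qed
  have part1: "pd_mat (ridge_est S T lam)" using pd0 Om O0_def by simp
  have part2: "matrix_inv (ridge_est S T lam) - (S - lam *\<^sub>R T) - lam *\<^sub>R ridge_est S T lam = 0"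
    using stat unfolding Om inv A_def O0_def .
  have part3: "pen_loglik S T lam \<Omega> \<le> pen_loglik S T lam O0" if pdO: "pd_mat \<Omega>" for \<Omega>
  proof -
    have sO: "transpose \<Omega> = \<Omega>" using pdO by (simp add: pd_mat_def sym_mat_def)
    define Mg where "Mg = sp Q g"
    define rg where "rg = (\<chi> i. sqrt (g$i))"
    define K where "K = Q ** dg rg"
    define N where "N = transpose K ** \<Omega> ** K"
    have rgrg: "(\<chi> i. rg$i * rg$i) = g" using gp by (simp add: rg_def vec_eq_iff less_imp_le)
    have KK: "K ** transpose K = Mg"
    proof -
      have "K ** transpose K = Q ** (dg rg ** dg rg) ** transpose Q"
        unfolding K_def by (simp add: matrix_transpose_mul dg_transpose matrix_mul_assoc)
      then show ?thesis by (simp add: dg_dg rgrg Mg_def sp_def)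
    qed
    define Ki where "Ki = dg (\<chi> i. 1 / rg$i) ** transpose Q"
    have KiK: "Ki ** K = mat 1"
    proof -
      have "Ki ** K = dg (\<chi> i. 1 / rg$i) ** (transpose Q ** Q) ** dg rg"
        unfolding Ki_def K_def by (simp add: matrix_mul_assoc)
      also have "\<dots> = dg (\<chi> i. 1 / rg$i) ** dg rg" using o by (simp add: orth_TQ)
      also have "\<dots> = mat 1"
      proof -
        have e: "(\<chi> i. 1/rg$i * rg$i) = vec 1" using gp by (simp add: rg_def vec_eq_iff less_imp_neq[symmetric])
        show ?thesis by (simp only: dg_dg vec_lambda_beta e dg_vec)
      qed
      finally show ?thesis .
    qed
    have sN: "sym_mat N" unfolding N_def sym_mat_def
      by (simp add: matrix_transpose_mul sO matrix_mul_assoc)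
    have pdN: "pd_mat N" unfolding pd_mat_def
    proof (intro conjI allI impI sN)
      fix x :: "real^'n" assume x0: "x \<noteq> 0"
      have "Ki *v (K *v x) = x" by (simp add: matrix_vector_mul_assoc KiK)
      then have "K *v x \<noteq> 0" using x0 by auto
      then have "(K *v x) \<bullet> (\<Omega> *v (K *v x)) > 0" using pdO by (simp add: pd_mat_def)
      moreover have "x \<bullet> (N *v x) = (K *v x) \<bullet> (\<Omega> *v (K *v x))"
      proof -
        have "x \<bullet> (N *v x) = x \<bullet> (transpose K *v (\<Omega> *v (K *v x)))"
          unfolding N_def by (simp add: matrix_vector_mul_assoc matrix_mul_assoc)
        also have "\<dots> = (K *v x) \<bullet> (\<Omega> *v (K *v x))" by (simp only: inner_mv transpose_transpose)
        finally show ?thesis .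
      qed
      ultimately show "x \<bullet> (N *v x) > 0" by simp
    qed
    obtain P nu where oP: "orthogonal_matrix P" and Nn: "N = sp P nu"
      using spectral[OF sN] unfolding sp_def by blast
    have nup: "nu$i > 0" for i using pd_sp_conv[OF oP] pdN Nn by blast
    have detN: "det N = prod (\<lambda>i. nu$i) UNIV" using det_sp[OF oP] Nn by simp
    have trN: "trace N = sum (\<lambda>i. nu$i) UNIV" using trace_sp[OF oP] Nn by simp
    have lnN: "ln (det N) \<le> trace N - real CARD('n)"
    proof -
      have "ln (det N) = (\<Sum>i\<in>UNIV. ln (nu$i))" unfolding detN
        by (rule ln_prod) (use nup in \<open>auto simp: less_imp_neq[symmetric]\<close>)
      also have "\<dots> \<le> (\<Sum>i\<in>UNIV. nu$i - 1)"
        by (rule sum_mono) (use nup in \<open>simp add: ln_le_minus_one\<close>)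
      also have "\<dots> = trace N - real CARD('n)" by (simp add: trN sum_subtractf)
      finally show ?thesis .
    qed
    have detK: "det K = det Q * prod (\<lambda>i. rg$i) UNIV" unfolding K_def by (simp add: det_mul det_dg)
    have prg: "prod (\<lambda>i. rg$i) UNIV * prod (\<lambda>i. rg$i) UNIV = prod (\<lambda>i. g$i) UNIV"
    proof -
      have "prod (\<lambda>i. rg$i) UNIV * prod (\<lambda>i. rg$i) UNIV = prod (\<lambda>i. rg$i * rg$i) UNIV"
        by (simp add: prod.distrib)
      also have "\<dots> = prod (\<lambda>i. g$i) UNIV" using rgrg by (metis vec_lambda_beta)
      finally show ?thesis .
    qed
    have detN2: "det N = prod (\<lambda>i. g$i) UNIV * det \<Omega>"
    proof -
      have "det N = det K * det K * det \<Omega>" unfolding N_def by (simp add: det_mul)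
      also have "\<dots> = (det Q * det Q) * (prod (\<lambda>i. rg$i) UNIV * prod (\<lambda>i. rg$i) UNIV) * det \<Omega>"
        by (simp add: detK algebra_simps)
      finally show ?thesis using det_orth[OF o] prg by simp
    qed
    have detO0: "det O0 = prod (\<lambda>i. gi$i) UNIV" unfolding O0_def using det_sp[OF o] by simp
    have pgg: "prod (\<lambda>i. g$i) UNIV * prod (\<lambda>i. gi$i) UNIV = 1"
      by (simp add: prod.distrib[symmetric] ggi)
    have dO0p: "det O0 > 0" unfolding detO0 using gip by (simp add: prod_pos)
    have dNp: "det N > 0" unfolding detN using nup by (simp add: prod_pos)
    have detO: "det \<Omega> = det N * det O0" unfolding detN2 detO0 using pgg
      by (simp add: algebra_simps)
    have lnO: "ln (det \<Omega>) = ln (det N) + ln (det O0)" unfolding detO using dO0p dNp by (simp add: ln_mult)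
    have trN2: "trace N = trace (Mg ** \<Omega>)"
    proof -
      have "trace N = trace (K ** (transpose K ** \<Omega>))"
        unfolding N_def by (rule trace_mul_sym)
      also have "\<dots> = trace (Mg ** \<Omega>)" by (simp only: matrix_mul_assoc KK)
      finally show ?thesis .
    qed
    have trMO0: "trace (Mg ** O0) = real CARD('n)"
      unfolding Mg_def O0_def using o one by (simp add: sp_mult trace_I)
    have key: "ln (det \<Omega>) - ln (det O0) \<le> trace (Mg ** \<Omega>) - trace (Mg ** O0)"
      using lnO lnN trN2 trMO0 by simp
    define E where "E = O0 - T"
    define D where "D = \<Omega> - O0"
    have sE: "transpose E = E" unfolding E_def using pd0 sT
      by (simp add: transpose_diff' pd_mat_def sym_mat_def)
    have MgE: "Mg = S + lam *\<^sub>R E"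
    proof -
      have "sp Q g = A + lam *\<^sub>R O0" using stat by (simp only: diff_diff_eq right_minus_eq)
      moreover have "S + lam *\<^sub>R E = A + lam *\<^sub>R O0" unfolding E_def A_def by (simp add: scaleR_diff_right)
      ultimately show ?thesis unfolding Mg_def by simp
    qed
    have f1: "trace (Mg ** \<Omega>) - trace (Mg ** O0) = trace (S ** \<Omega>) - trace (S ** O0) + lam * trace (E ** D)"
    proof -
      have "trace (Mg ** \<Omega>) - trace (Mg ** O0) = trace (Mg ** D)"
        unfolding D_def by (simp add: mm_diff_l trace_sub)
      also have "Mg ** D = S ** D + lam *\<^sub>R (E ** D)"
        unfolding MgE by (simp add: mm_add_r scalar_matrix_assoc)
      finally show ?thesis unfolding D_def by (simp add: trace_add trace_scale mm_diff_l trace_sub)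
    qed
    have f2: "trace (transpose (\<Omega> - T) ** (\<Omega> - T))
        = trace (transpose E ** E) + 2 * trace (E ** D) + trace (transpose D ** D)"
    proof -
      have eq: "\<Omega> - T = E + D" unfolding E_def D_def by simp
      have t: "trace (transpose D ** E) = trace (E ** D)"
      proof -
        have "trace (transpose D ** E) = trace (transpose (transpose D ** E))"
          by (simp only: trace_transpose')
        also have "\<dots> = trace (transpose E ** D)" by (simp only: matrix_transpose_mul transpose_transpose)
        finally show ?thesis by (simp only: sE)
      qed
      show ?thesis unfolding eq
        by (simp add: transpose_add' mm_add_r matrix_add_ldistrib trace_add t sE)
    qed
    have g0: "trace (transpose D ** D) \<ge> 0" by (rule trace_gram_nonneg)
    have g1: "0 \<le> lam * trace (transpose D ** D)" using g0 lp by simp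
    have ar: "ld - s - l / 2 * (e + 2 * c + q) \<le> ld0 - s0 - l / 2 * e"
      if "ld - ld0 \<le> s - s0 + l * c" "0 \<le> l * q" for ld ld0 s s0 e c q l :: real
    proof -
      have "l / 2 * (e + 2 * c + q) = l / 2 * e + l * c + l * q / 2" by (simp add: algebra_simps)
      then show ?thesis using that by linarith
    qed
    have k2: "ln (det \<Omega>) - ln (det O0) \<le> trace (S ** \<Omega>) - trace (S ** O0) + lam * trace (E ** D)"
      using key f1 by simp
    show ?thesis unfolding pen_loglik_def f2 E_def[symmetric]
      by (rule ar[OF k2 g1])
  qed
  show ?thesis using part1 part2 part3 Om O0_def by simp
qed

end
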